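(* Consider the $k$-agent prophet game with random tie-breaking. For every agent $i$, the single threshold strategy $T^1=\frac{1}{k+1}\mathbb{E}[y_1]$ guarantees agent $i$ an expected utility of at least $\frac{1}{k+1}\mathbb{E}[y_1]=\frac{1}{k+1}\mathbb{E}[\max_t v_t]$, regardless of the strategies of the other agents.
   Context: Prophet game with competing agents: there are $n$ rewards $v_1,\ldots,v_n$, where $v_t$ is a non-negative real random variable drawn from a known distribution $F_t$ (with finite mean), independently across $t$. There are $k$ agents. At each time $t=1,\ldots,n$, the value $v_t$ is revealed to all agents, and every active agent (an agent who has not yet received a reward) decides whether to select $v_t$. If exactly one agent selects $v_t$, it is assigned to that agent. If several agents select it, it is assigned to one of them by the tie-breaking rule. Under random tie-breaking, the reward goes to a uniformly random agent among those selecting it. An agent who receives a reward becomes inactive, and unselected rewards are lost forever. A strategy of an agent is a (possibly randomized) rule that, for each $t$, decides whether to select $v_t$ based on $t$, the realized value $v_t$, and the set of currently active agents. The utility $u_i(S)$ of agent $i$ under strategy profile $S=(S_i,S_{-i})$ is her expected received reward (zero if she receives none). A strategy $S_i$ guarantees agent $i$ utility $\alpha$ if $u_i(S_i,S_{-i})\ge\alpha$ for every $S_{-i}$. The single threshold strategy $T$ selects $v_t$ if and only if the agent is still active and $v_t\ge T$. For $j=1,\ldots,n$, $y_j$ denotes the $j$-th largest value among $v_1,\ldots,v_n$. *)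

theory Defs
  imports "HOL-Probability.Probability"
begin

text \<open>A (behavioural) strategy profile is P :: agent => time => value => active set => real,
  where P j t v A is the probability that agent j selects value v at time t when the set of
  active agents is A.\<close>

definition sel_prob :: "(nat \<Rightarrow> real) \<Rightarrow> nat set \<Rightarrow> nat set \<Rightarrow> real" where
  "sel_prob q A S = (\<Prod>j\<in>A. if j \<in> S then q j else 1 - q j)"

text \<open>play F P i m t A: expected reward agent i receives from rounds t, t+1, ..., t+m-1
  when A is the set of active agents at the start of round t (random tie-breaking).\<close>
primrec play :: "(nat \<Rightarrow> real measure) \<Rightarrow> (nat \<Rightarrow> nat \<Rightarrow> real \<Rightarrow> nat set \<Rightarrow> real)
    \<Rightarrow> nat \<Rightarrow> nat \<Rightarrow> nat \<Rightarrow> nat set \<Rightarrow> real" where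
  "play F P i 0 t A = 0"
| "play F P i (Suc m) t A =
    (if i \<notin> A then 0 else
     (\<integral>v. (\<Sum>S\<in>Pow A. sel_prob (\<lambda>j. P j t v A) A S *
         (if S = {} then play F P i m (Suc t) A
          else (\<Sum>w\<in>S. (if w = i then v else play F P i m (Suc t) (A - {w})) / real (card S))))
      \<partial>(F t)))"

definition utility :: "(nat \<Rightarrow> real measure) \<Rightarrow> nat \<Rightarrow> nat
    \<Rightarrow> (nat \<Rightarrow> nat \<Rightarrow> real \<Rightarrow> nat set \<Rightarrow> real) \<Rightarrow> nat \<Rightarrow> real" where
  "utility F n k P i = play F P i n 1 {..<k}"

text \<open>Single threshold strategy T: select iff v >= T (selection only matters while active).\<close>
definition threshold_strategy :: "real \<Rightarrow> nat \<Rightarrow> real \<Rightarrow> nat set \<Rightarrow> real" where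
  "threshold_strategy T t v A = (if T \<le> v then 1 else 0)"

definition E_y1 :: "(nat \<Rightarrow> real measure) \<Rightarrow> nat \<Rightarrow> real" where
  "E_y1 F n = (\<integral>v. Max (v ` {1..n}) \<partial>(PiM {1..n} F))"

end

theory Submission
  imports Defs
begin

lemma sel_prob_sum:
  assumes "finite A"
  shows "(\<Sum>S\<in>Pow A. sel_prob q A S) = 1"
proof -
  have "(\<Prod>x\<in>A. q x + (1 - q x)) = (\<Sum>X\<in>Pow A. (\<Prod>x\<in>X. q x) * (\<Prod>x\<in>A-X. 1 - q x))"
    by (rule prod_add[OF assms])
  also have "\<dots> = (\<Sum>S\<in>Pow A. sel_prob q A S)"
  proof (rule sum.cong[OF refl])
    fix S assume "S \<in> Pow A"
    then have "A \<inter> {x. x \<in> S} = S" "A \<inter> - {x. x \<in> S} = A - S" by auto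
    then show "(\<Prod>x\<in>S. q x) * (\<Prod>x\<in>A-S. 1 - q x) = sel_prob q A S"
      unfolding sel_prob_def using prod.If_cases[OF assms, of "\<lambda>x. x \<in> S" q "\<lambda>x. 1 - q x"]
      by simp
  qed
  finally show ?thesis by simp
qed

lemma sel_prob_nonneg:
  assumes "\<forall>j\<in>A. 0 \<le> q j \<and> q j \<le> 1"
  shows "0 \<le> sel_prob q A S"
  unfolding sel_prob_def using assms by (intro prod_nonneg) auto

lemma sel_prob_le1:
  assumes "\<forall>j\<in>A. 0 \<le> q j \<and> q j \<le> 1"
  shows "sel_prob q A S \<le> 1"
  unfolding sel_prob_def using assms by (intro prod_le_1) auto

lemma pointwise:
  fixes q :: "nat \<Rightarrow> real" and c :: "nat set \<Rightarrow> real" and k :: nat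
  assumes fin: "finite A" and iA: "i \<in> A" and cardA: "card A \<le> k"
    and q: "\<forall>j\<in>A. 0 \<le> q j \<and> q j \<le> 1" and qi: "q i = (if T \<le> v then 1 else 0)"
    and MT: "M \<le> T" and cA: "M \<le> c A" and cw: "\<forall>w\<in>A. w \<noteq> i \<longrightarrow> M \<le> c (A - {w})"
  shows "M + max (v - T) 0 / real k \<le> (\<Sum>S\<in>Pow A. sel_prob q A S *
         (if S = {} then c A
          else (\<Sum>w\<in>S. (if w = i then v else c (A - {w})) / real (card S))))"
    (is "?L \<le> (\<Sum>S\<in>Pow A. sel_prob q A S * ?B S)")
proof -
  have "0 < card A" using iA fin card_gt_0_iff by blast
  then have kpos: "0 < k" using cardA by linarith
  have key: "?L \<le> ?B S" if SA: "S \<subseteq> A" and nz: "sel_prob q A S \<noteq> 0" for S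
  proof (cases "T \<le> v")
    case True
    have "i \<in> S"
    proof (rule ccontr)
      assume "i \<notin> S"
      then have "sel_prob q A S = 0" unfolding sel_prob_def
        using iA fin qi True by (intro prod_zero) auto
      with nz show False by simp
    qed
    then have Sne: "S \<noteq> {}" by auto
    have finS: "finite S" using SA fin finite_subset by blast
    define s where "s = card S"
    have s1: "1 \<le> s" using Sne finS unfolding s_def by (simp add: Suc_leI card_gt_0_iff)
    have sk: "s \<le> k" using card_mono[OF fin SA] cardA s_def by simp
    have eq: "(\<Sum>w\<in>S. (if w = i then v else c (A - {w})) / real s)
          = v / real s + (\<Sum>w\<in>S-{i}. (if w = i then v else c (A - {w})) / real s)"
      using sum.remove[OF finS \<open>i\<in>S\<close>, of "\<lambda>w. (if w = i then v else c (A - {w})) / real s"] by simp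
    have ge: "(\<Sum>w\<in>S-{i}. (if w = i then v else c (A - {w})) / real s) \<ge> (\<Sum>w\<in>S-{i}. M / real s)"
      using cw SA by (intro sum_mono divide_right_mono) auto
    have cd: "card (S - {i}) = s - 1" using card_Diff_singleton[OF \<open>i\<in>S\<close>] s_def by simp
    have "(\<Sum>w\<in>S-{i}. M / real s) = (real s - 1) * M / real s"
      using cd s1 by (simp add: of_nat_diff)
    with eq ge have "(\<Sum>w\<in>S. (if w = i then v else c (A - {w})) / real s) \<ge> v / real s + (real s - 1) * M / real s"
      by linarith
    moreover have "v / real s + (real s - 1) * M / real s = M + (v - M) / real s"
      using s1 by (simp add: field_simps)
    moreover have "(v - M) / real s \<ge> (v - M) / real k"
      using s1 sk True MT by (intro divide_left_mono) auto
    moreover have "(v - M) / real k \<ge> max (v - T) 0 / real k"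
      using True MT kpos by (intro divide_right_mono) auto
    ultimately have "?L \<le> (\<Sum>w\<in>S. (if w = i then v else c (A - {w})) / real (card S))"
      unfolding s_def by linarith
    then show ?thesis using Sne by simp
  next
    case False
    have "i \<notin> S"
    proof
      assume "i \<in> S"
      then have "sel_prob q A S = 0" unfolding sel_prob_def
        using iA fin qi False by (intro prod_zero) auto
      with nz show False by simp
    qed
    have L: "?L = M" using False by simp
    show ?thesis
    proof (cases "S = {}")
      case True then show ?thesis unfolding L using cA by simp
    next
      case Sne: False
      have finS: "finite S" using SA fin finite_subset by blast
      have cS: "card S > 0" using Sne finS card_gt_0_iff by blast
      have "(\<Sum>w\<in>S. M / real (card S)) \<le> (\<Sum>w\<in>S. (if w = i then v else c (A - {w})) / real (card S))"
        using cw SA \<open>i \<notin> S\<close> by (intro sum_mono divide_right_mono) auto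
      moreover have "(\<Sum>w\<in>S. M / real (card S)) = M" using cS by simp
      ultimately show ?thesis unfolding L using Sne by simp
    qed
  qed
  have "?L = (\<Sum>S\<in>Pow A. sel_prob q A S * ?L)"
    using sel_prob_sum[OF fin, of q] by (simp add: sum_distrib_right[symmetric])
  also have "\<dots> \<le> (\<Sum>S\<in>Pow A. sel_prob q A S * ?B S)"
  proof (rule sum_mono)
    fix S assume "S \<in> Pow A"
    show "sel_prob q A S * ?L \<le> sel_prob q A S * ?B S"
    proof (cases "sel_prob q A S = 0")
      case False
      then show ?thesis using key[of S] \<open>S \<in> Pow A\<close> sel_prob_nonneg[OF q, of S]
        by (intro mult_left_mono) auto
    qed simp
  qed
  finally show ?thesis .
qed


lemma main_ind:
  fixes F :: "nat \<Rightarrow> real measure" and Q :: "nat \<Rightarrow> nat \<Rightarrow> real \<Rightarrow> nat set \<Rightarrow> real"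
    and T :: real and n k i :: nat
  assumes Fp: "\<And>t. t \<in> {1..n} \<Longrightarrow> prob_space (F t)"
    and Fs: "\<And>t. t \<in> {1..n} \<Longrightarrow> sets (F t) = sets borel"
    and Fi: "\<And>t. t \<in> {1..n} \<Longrightarrow> integrable (F t) (\<lambda>x. x)"
    and Qb: "\<And>j t v A. 0 \<le> Q j t v A \<and> Q j t v A \<le> 1"
    and Qm: "\<And>j t A. (\<lambda>v. Q j t v A) \<in> borel_measurable borel"
    and Qi: "\<And>t v A. Q i t v A = (if T \<le> v then 1 else 0)"
    and kpos: "0 < k"
  shows "i \<in> A \<Longrightarrow> A \<subseteq> {..<k} \<Longrightarrow> 1 \<le> t \<Longrightarrow> t + m \<le> Suc n \<Longrightarrow>
    min T ((\<Sum>s\<in>{t..<t+m}. \<integral>x. max (x - T) 0 \<partial>F s) / real k) \<le> play F Q i m t A"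
proof (induction m arbitrary: t A)
  case 0 then show ?case by simp
next
  case (Suc m)
  have tn: "t \<in> {1..n}" using Suc.prems by auto
  interpret P: prob_space "F t" using Fp tn by auto
  have sF: "sets (F t) = sets borel" using Fs tn by auto
  have intv: "integrable (F t) (\<lambda>x. x)" using Fi tn by auto
  define M where "M = min T ((\<Sum>s\<in>{Suc t..<Suc t+m}. \<integral>x. max (x - T) 0 \<partial>F s) / real k)"
  define c where "c = (\<lambda>B. play F Q i m (Suc t) B)"
  have finA: "finite A" using Suc.prems(2) finite_subset by blast
  have cardA: "card A \<le> k" using card_mono[OF _ Suc.prems(2)] by simp
  have cA: "M \<le> c A" unfolding M_def c_def by (intro Suc.IH) (use Suc.prems in auto)
  have cw: "\<forall>w\<in>A. w \<noteq> i \<longrightarrow> M \<le> c (A - {w})"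
  proof (intro ballI impI)
    fix w assume "w \<in> A" "w \<noteq> i"
    then show "M \<le> c (A - {w})" unfolding M_def c_def
      by (intro Suc.IH) (use Suc.prems in auto)
  qed
  have MT: "M \<le> T" unfolding M_def by simp
  define B where "B = (\<lambda>S v. if S = {} then c A
          else (\<Sum>w\<in>S. (if w = i then v else c (A - {w})) / real (card S)))"
  define g where "g = (\<lambda>v. \<Sum>S\<in>Pow A. sel_prob (\<lambda>j. Q j t v A) A S * B S v)"
  have play_eq: "play F Q i (Suc m) t A = (\<integral>v. g v \<partial>F t)"
    using Suc.prems(1) unfolding g_def B_def c_def by simp
  have Qm': "(\<lambda>v. Q j t v A) \<in> borel_measurable (F t)" for j
    unfolding measurable_cong_sets[OF sF refl, of borel] by (rule Qm)
  have Bint: "integrable (F t) (B S)" for S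
  proof (cases "S = {}")
    case True then show ?thesis unfolding B_def by simp
  next
    case False
    have "integrable (F t) (\<lambda>v. (if w = i then v else c (A - {w})) / real (card S))" for w
      by (cases "w = i") (auto intro: intv)
    then show ?thesis unfolding B_def using False by (simp add: Bochner_Integration.integrable_sum)
  qed
  have selm: "(\<lambda>v. sel_prob (\<lambda>j. Q j t v A) A S) \<in> borel_measurable (F t)" for S
    unfolding sel_prob_def
  proof (rule borel_measurable_prod)
    fix j show "(\<lambda>v. if j \<in> S then Q j t v A else 1 - Q j t v A) \<in> borel_measurable (F t)"
      by (cases "j \<in> S") (auto intro: Qm' borel_measurable_diff)
  qed
  have gmeas: "g \<in> borel_measurable (F t)"
    unfolding g_def
    by (intro borel_measurable_sum borel_measurable_times selm borel_measurable_integrable[OF Bint])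
  have gint: "integrable (F t) g"
  proof (rule Bochner_Integration.integrable_bound[OF _ gmeas])
    show "integrable (F t) (\<lambda>v. \<Sum>S\<in>Pow A. \<bar>B S v\<bar>)"
      by (intro Bochner_Integration.integrable_sum integrable_abs Bint)
    show "AE v in F t. norm (g v) \<le> norm (\<Sum>S\<in>Pow A. \<bar>B S v\<bar>)"
    proof (rule AE_I2)
      fix v
      have "\<bar>g v\<bar> \<le> (\<Sum>S\<in>Pow A. \<bar>sel_prob (\<lambda>j. Q j t v A) A S * B S v\<bar>)"
        unfolding g_def by (rule sum_abs)
      also have "\<dots> \<le> (\<Sum>S\<in>Pow A. \<bar>B S v\<bar>)"
      proof (rule sum_mono)
        fix S
        have "0 \<le> sel_prob (\<lambda>j. Q j t v A) A S" "sel_prob (\<lambda>j. Q j t v A) A S \<le> 1"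
          using sel_prob_nonneg sel_prob_le1 Qb by auto
        then show "\<bar>sel_prob (\<lambda>j. Q j t v A) A S * B S v\<bar> \<le> \<bar>B S v\<bar>"
          by (simp add: abs_mult mult_left_le_one_le)
      qed
      also have "\<dots> = norm (\<Sum>S\<in>Pow A. \<bar>B S v\<bar>)"
        by (simp add: sum_nonneg)
      finally show "norm (g v) \<le> norm (\<Sum>S\<in>Pow A. \<bar>B S v\<bar>)" by simp
    qed
  qed
  have eint: "integrable (F t) (\<lambda>v. max (v - T) 0)"
    using intv by auto
  have hint: "integrable (F t) (\<lambda>v. M + max (v - T) 0 / real k)"
    using eint by auto
  define e where "e = (\<integral>x. max (x - T) 0 \<partial>F t)"
  have e0: "0 \<le> e" unfolding e_def by simp
  have "M + e / real k = (\<integral>v. M + max (v - T) 0 / real k \<partial>F t)"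
    unfolding e_def using eint by (simp add: P.prob_space)
  also have "\<dots> \<le> (\<integral>v. g v \<partial>F t)"
  proof (rule integral_mono[OF hint gint])
    fix v
    show "M + max (v - T) 0 / real k \<le> g v"
      unfolding g_def B_def
      by (rule pointwise[OF finA Suc.prems(1) cardA]) (use Qb Qi MT cA cw in auto)
  qed
  finally have main: "M + e / real k \<le> play F Q i (Suc m) t A" using play_eq by simp
  have sumeq: "(\<Sum>s\<in>{t..<t + Suc m}. \<integral>x. max (x - T) 0 \<partial>F s)
      = e + (\<Sum>s\<in>{Suc t..<Suc t+m}. \<integral>x. max (x - T) 0 \<partial>F s)"
    unfolding e_def by (subst sum.atLeast_Suc_lessThan) auto
  show ?case
  proof (cases "T \<le> (\<Sum>s\<in>{Suc t..<Suc t+m}. \<integral>x. max (x - T) 0 \<partial>F s) / real k")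
    case True
    then have "M = T" unfolding M_def by simp
    then have "T \<le> M + e / real k" using e0 kpos by simp
    then show ?thesis using main by (meson min.coboundedI1 order_trans)
  next
    case False
    then have "M = (\<Sum>s\<in>{Suc t..<Suc t+m}. \<integral>x. max (x - T) 0 \<partial>F s) / real k"
      unfolding M_def by simp
    then have "M + e / real k = (\<Sum>s\<in>{t..<t + Suc m}. \<integral>x. max (x - T) 0 \<partial>F s) / real k"
      unfolding sumeq by (simp add: add_divide_distrib)
    then show ?thesis using main by (metis min.cobounded2 order_trans)
  qed
qed


lemma Ey1_bound:
  fixes F :: "nat \<Rightarrow> real measure" and T :: real and n :: nat
  assumes n1: "1 \<le> n"
    and Fp: "\<And>t. t \<in> {1..n} \<Longrightarrow> prob_space (F t)"
    and Fs: "\<And>t. t \<in> {1..n} \<Longrightarrow> sets (F t) = sets borel"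
    and Fi: "\<And>t. t \<in> {1..n} \<Longrightarrow> integrable (F t) (\<lambda>x. x)"
    and intmax: "integrable (PiM {1..n} F) (\<lambda>v. Max (v ` {1..n}))"
  shows "E_y1 F n \<le> T + (\<Sum>s\<in>{1..n}. \<integral>x. max (x - T) 0 \<partial>F s)"
proof -
  let ?Pi = "PiM {1..n} F"
  interpret PP: prob_space ?Pi by (rule prob_space_PiM) (use Fp in auto)
  have fm: "(\<lambda>x. max (x - T) 0) \<in> borel_measurable (F s)" if "s \<in> {1..n}" for s
    unfolding measurable_cong_sets[OF Fs[OF that] refl, of borel] by measurable
  have cm: "(\<lambda>\<omega>. \<omega> s) \<in> measurable ?Pi (F s)" if "s \<in> {1..n}" for s
    using that by (rule measurable_component_singleton)
  have di: "distr ?Pi (F s) (\<lambda>\<omega>. \<omega> s) = F s" if "s \<in> {1..n}" for s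
    by (rule distr_PiM_component) (use Fp that in auto)
  have ci: "integrable ?Pi (\<lambda>x. max (x s - T) 0)" if "s \<in> {1..n}" for s
  proof -
    interpret Ps: prob_space "F s" using Fp[OF that] .
    have "integrable (F s) (\<lambda>x. max (x - T) 0)" using Fi[OF that] by auto
    then show ?thesis
      using integrable_distr_eq[OF cm[OF that] fm[OF that]] di[OF that] by simp
  qed
  have ce: "(\<integral>x. max (x s - T) 0 \<partial>?Pi) = (\<integral>x. max (x - T) 0 \<partial>F s)" if "s \<in> {1..n}" for s
    using integral_distr[OF cm[OF that] fm[OF that]] di[OF that] by simp
  have rint: "integrable ?Pi (\<lambda>x. T + (\<Sum>s\<in>{1..n}. max (x s - T) 0))"
    using ci by (intro Bochner_Integration.integrable_add Bochner_Integration.integrable_sum PP.integrable_const) auto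
  have "E_y1 F n \<le> (\<integral>x. T + (\<Sum>s\<in>{1..n}. max (x s - T) 0) \<partial>?Pi)"
    unfolding E_y1_def
  proof (rule integral_mono[OF intmax rint])
    fix x :: "nat \<Rightarrow> real"
    have ne: "x ` {1..n} \<noteq> {}" using n1 by auto
    obtain s0 where s0: "s0 \<in> {1..n}" "Max (x ` {1..n}) = x s0"
      using Max_in[OF finite_imageI[OF finite_atLeastAtMost] ne] by auto
    have "max (x s0 - T) 0 \<le> (\<Sum>s\<in>{1..n}. max (x s - T) 0)"
      by (rule member_le_sum[OF s0(1)]) auto
    then show "Max (x ` {1..n}) \<le> T + (\<Sum>s\<in>{1..n}. max (x s - T) 0)"
      using s0(2) by linarith
  qed
  also have "\<dots> = T + (\<Sum>s\<in>{1..n}. \<integral>x. max (x s - T) 0 \<partial>?Pi)"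
  proof -
    have sint: "integrable ?Pi (\<lambda>x. \<Sum>s\<in>{1..n}. max (x s - T) 0)"
      using ci by (intro Bochner_Integration.integrable_sum) auto
    have "(\<integral>x. T + (\<Sum>s\<in>{1..n}. max (x s - T) 0) \<partial>?Pi)
        = (\<integral>x. T \<partial>?Pi) + (\<integral>x. (\<Sum>s\<in>{1..n}. max (x s - T) 0) \<partial>?Pi)"
      by (rule Bochner_Integration.integral_add[OF PP.integrable_const sint])
    also have "(\<integral>x. T \<partial>?Pi) = T" using PP.prob_space by simp
    also have "(\<integral>x. (\<Sum>s\<in>{1..n}. max (x s - T) 0) \<partial>?Pi) = (\<Sum>s\<in>{1..n}. \<integral>x. max (x s - T) 0 \<partial>?Pi)"
      by (rule Bochner_Integration.integral_sum) (use ci in auto)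
    finally show ?thesis .
  qed
  also have "\<dots> = T + (\<Sum>s\<in>{1..n}. \<integral>x. max (x - T) 0 \<partial>F s)"
    using ce by simp
  finally show ?thesis .
qed

theorem mainTheorem3:
  fixes F :: "nat \<Rightarrow> real measure" and n k i :: nat
    and P :: "nat \<Rightarrow> nat \<Rightarrow> real \<Rightarrow> nat set \<Rightarrow> real"
  assumes "1 \<le> n" and "i < k"
    and "\<forall>t\<in>{1..n}. prob_space (F t) \<and> sets (F t) = sets borel
                      \<and> (AE x in F t. 0 \<le> x) \<and> integrable (F t) (\<lambda>x. x)"
    and "\<forall>j t v A. j \<noteq> i \<longrightarrow> 0 \<le> P j t v A \<and> P j t v A \<le> 1"
    and "\<forall>j t A. j \<noteq> i \<longrightarrow> (\<lambda>v. P j t v A) \<in> borel_measurable borel"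
  shows "utility F n k (P(i := threshold_strategy (E_y1 F n / real (k + 1)))) i
           \<ge> E_y1 F n / real (k + 1)"
proof -
  define T where "T = E_y1 F n / real (k + 1)"
  define Q where "Q = P(i := threshold_strategy T)"
  have kpos: "0 < k" using assms(2) by simp
  have Fp: "\<And>t. t \<in> {1..n} \<Longrightarrow> prob_space (F t)"
    and Fs: "\<And>t. t \<in> {1..n} \<Longrightarrow> sets (F t) = sets borel"
    and Fi: "\<And>t. t \<in> {1..n} \<Longrightarrow> integrable (F t) (\<lambda>x. x)"
    using assms(3) by auto
  have Qb: "\<And>j t v A. 0 \<le> Q j t v A \<and> Q j t v A \<le> 1"
    using assms(4) unfolding Q_def threshold_strategy_def by auto
  have thm_: "(\<lambda>v. threshold_strategy T t v A) \<in> borel_measurable borel" for t A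
    unfolding threshold_strategy_def by measurable
  have Qm: "\<And>j t A. (\<lambda>v. Q j t v A) \<in> borel_measurable borel"
    using assms(5) thm_ unfolding Q_def by auto
  have Qi: "\<And>t v A. Q i t v A = (if T \<le> v then 1 else 0)"
    unfolding Q_def threshold_strategy_def by simp
  define R where "R = (\<Sum>s\<in>{1..<1+n}. \<integral>x. max (x - T) 0 \<partial>F s)"
  have R0: "0 \<le> R" unfolding R_def by (intro sum_nonneg) simp
  have base: "min T (R / real k) \<le> play F Q i n 1 {..<k}"
    unfolding R_def by (rule main_ind[where n=n and F=F and Q=Q and T=T and i=i and k=k, OF Fp Fs Fi Qb Qm Qi kpos]) (use assms(2) in auto)
  have "T \<le> min T (R / real k)"
  proof (cases "integrable (PiM {1..n} F) (\<lambda>v. Max (v ` {1..n}))")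
    case True
    have "E_y1 F n \<le> T + R"
      unfolding R_def using Ey1_bound[OF assms(1) Fp Fs Fi True, of T]
      by (simp add: atLeastLessThanSuc_atLeastAtMost add.commute[of 1 n])
    moreover have "E_y1 F n = real (k + 1) * T" unfolding T_def by simp
    ultimately have "real k * T \<le> R" by (simp add: algebra_simps)
    then have "T \<le> R / real k" using kpos by (simp add: field_simps)
    then show ?thesis by simp
  next
    case False
    then have "E_y1 F n = 0" unfolding E_y1_def by (rule not_integrable_integral_eq)
    then have "T = 0" unfolding T_def by simp
    then show ?thesis using R0 kpos by simp
  qed
  then show ?thesis using base unfolding utility_def Q_def T_def by linarith
qed

end
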